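(* $\mathrm{TC}(\mathbb{S}^1_3)=3$.
   Context: Finite spaces are finite $T_0$ spaces identified with finite posets ($x^\downarrow=\{y:y\le x\}$ is the minimal open neighborhood of $x$; open sets are the down-closed sets). $\mathbb{S}^1_3=\{x_0,x_1,x_2,y_0,y_1,y_2\}$ has minimal open sets $x_i^\downarrow=\{x_i\}$ and $y_i^\downarrow=\{y_i,x_i,x_{i-1\bmod 3}\}$. Topological complexity is unreduced: for path-connected $X$, with $\pi:X^I\to X\times X$, $\gamma\mapsto(\gamma(0),\gamma(1))$ ($X^I$ with compact-open topology), $\mathrm{TC}(X)$ is the minimal $k$ such that $X\times X$ is covered by $k$ open sets each admitting a continuous section of $\pi$. *)

theory Defs
  imports "HOL-Analysis.Analysis"
begin

definition compact_open :: "'a topology \<Rightarrow> 'b topology \<Rightarrow> ('a \<Rightarrow> 'b) topology" where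
  "compact_open X Y =
     subtopology
       (topology_generated_by {{f. f ` K \<subseteq> V} | K V. compactin X K \<and> openin Y V})
       {f. continuous_map X Y f \<and> f \<in> extensional (topspace X)}"

abbreviation unit_interval :: "real topology" where
  "unit_interval \<equiv> top_of_set {0..1}"

definition path_space :: "'a topology \<Rightarrow> (real \<Rightarrow> 'a) topology" where
  "path_space X = compact_open unit_interval X"

definition has_motion_planner :: "'a topology \<Rightarrow> ('a \<times> 'a) set \<Rightarrow> bool" where
  "has_motion_planner X U \<longleftrightarrow>
     (\<exists>s. continuous_map (subtopology (prod_topology X X) U) (path_space X) s \<and>
          (\<forall>p\<in>U. s p 0 = fst p \<and> s p 1 = snd p))"

text \<open>(Unreduced) topological complexity: the least k such that X \<times> X is covered by
  k open sets each admitting a continuous section of \<pi>.\<close>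
definition TC :: "'a topology \<Rightarrow> nat" where
  "TC X = (LEAST k. \<exists>U :: nat \<Rightarrow> ('a \<times> 'a) set.
              (\<forall>i<k. openin (prod_topology X X) (U i) \<and> has_motion_planner X (U i)) \<and>
              (\<Union>i<k. U i) = topspace (prod_topology X X))"

datatype S13 = x0 | x1 | x2 | y0 | y1 | y2

fun minimal_open :: "S13 \<Rightarrow> S13 set" where
  "minimal_open x0 = {x0}"
| "minimal_open x1 = {x1}"
| "minimal_open x2 = {x2}"
| "minimal_open y0 = {y0, x0, x2}"
| "minimal_open y1 = {y1, x1, x0}"
| "minimal_open y2 = {y2, x2, x1}"

definition S1_3 :: "S13 topology" where
  "S1_3 = topology (\<lambda>U. \<forall>p\<in>U. minimal_open p \<subseteq> U)"

end

theory Submission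
  imports Defs
begin


abbreviation mo where "mo \<equiv> minimal_open"

lemma istop_S13: "istopology (\<lambda>U. \<forall>p\<in>U. mo p \<subseteq> U)"
  unfolding istopology_def by blast

lemma openin_S13: "openin S1_3 U \<longleftrightarrow> (\<forall>p\<in>U. mo p \<subseteq> U)"
  unfolding S1_3_def using topology_inverse'[OF istop_S13] by simp

lemma topspace_S13[simp]: "topspace S1_3 = UNIV"
  unfolding topspace_def openin_S13 by auto

lemma mo_self[simp]: "p \<in> mo p"
  by (cases p) auto

lemma mo_trans: "a \<in> mo b \<Longrightarrow> b \<in> mo c \<Longrightarrow> a \<in> mo c"
  by (cases a; cases b; cases c) auto

lemma open_mo: "openin S1_3 (mo p)"
  unfolding openin_S13 using mo_trans by blast

definition le2 :: "S13 \<times> S13 \<Rightarrow> S13 \<times> S13 \<Rightarrow> bool" where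
  "le2 p q \<longleftrightarrow> fst p \<in> mo (fst q) \<and> snd p \<in> mo (snd q)"

lemma open_prod_down:
  assumes "openin (prod_topology S1_3 S1_3) V" "q \<in> V" "le2 p q"
  shows "p \<in> V"
proof -
  obtain A B where AB: "openin S1_3 A" "openin S1_3 B" "fst q \<in> A" "snd q \<in> B" "A \<times> B \<subseteq> V"
    using assms(1,2) unfolding openin_prod_topology_alt by (metis prod.collapse)
  have "fst p \<in> A" using AB(1,3) assms(3) unfolding openin_S13 le2_def by blast
  moreover have "snd p \<in> B" using AB(2,4) assms(3) unfolding openin_S13 le2_def by blast
  ultimately show ?thesis using AB(5) by (metis mem_Sigma_iff prod.collapse subsetD)
qed

lemma down_open_prod:
  assumes "\<forall>q\<in>V. \<forall>p. le2 p q \<longrightarrow> p \<in> V"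
  shows "openin (prod_topology S1_3 S1_3) V"
  unfolding openin_prod_topology_alt
proof (intro allI impI)
  fix x y assume "(x,y) \<in> V"
  then show "\<exists>U W. openin S1_3 U \<and> openin S1_3 W \<and> x \<in> U \<and> y \<in> W \<and> U \<times> W \<subseteq> V"
    using assms by (intro exI[of _ "mo x"] exI[of _ "mo y"]) (auto simp: open_mo le2_def)
qed

lemma topspace_prod[simp]: "topspace (prod_topology S1_3 S1_3) = UNIV"
  by simp

lemma cont_local:
  assumes "\<forall>t\<in>{0..1}. \<exists>e>0. \<forall>u\<in>{0..1}. \<bar>u-t\<bar><e \<longrightarrow> \<gamma> u \<in> mo (\<gamma> t)"
  shows "continuous_map unit_interval S1_3 \<gamma>"
  unfolding continuous_map_def
proof (intro conjI allI impI)
  show "\<gamma> \<in> topspace unit_interval \<rightarrow> topspace S1_3" by simp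
  fix V assume V: "openin S1_3 V"
  show "openin unit_interval {x \<in> topspace unit_interval. \<gamma> x \<in> V}"
    unfolding openin_euclidean_subtopology_iff
  proof (intro conjI ballI)
    fix x assume x: "x \<in> {x \<in> topspace unit_interval. \<gamma> x \<in> V}"
    have x01: "x \<in> {0..1}" using x by simp
    obtain e where e: "e>0" "\<forall>u\<in>{0..1}. \<bar>u-x\<bar><e \<longrightarrow> \<gamma> u \<in> mo (\<gamma> x)"
      using assms x01 by blast
    have "mo (\<gamma> x) \<subseteq> V" using V x unfolding openin_S13 by auto
    then show "\<exists>e>0. \<forall>x'\<in>{0..1}. dist x' x < e \<longrightarrow> x' \<in> {x \<in> topspace unit_interval. \<gamma> x \<in> V}"
      using e by (intro exI[of _ e]) (auto simp: dist_real_def)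
  qed auto
qed

lemma local_cont:
  assumes "continuous_map unit_interval S1_3 \<gamma>" "t \<in> {0..1}"
  shows "\<exists>e>0. \<forall>u\<in>{0..1}. \<bar>u-t\<bar><e \<longrightarrow> \<gamma> u \<in> mo (\<gamma> t)"
proof -
  have "openin unit_interval {x \<in> topspace unit_interval. \<gamma> x \<in> mo (\<gamma> t)}"
    using assms(1) open_mo unfolding continuous_map_def by blast
  then show ?thesis using assms(2) unfolding openin_euclidean_subtopology_iff
    by (auto simp: dist_real_def)
qed



abbreviation "SS \<equiv> {{f::real\<Rightarrow>S13. f ` K \<subseteq> V} | K V. compactin unit_interval K \<and> openin S1_3 V}"

lemma gen_down:
  assumes "generate_topology_on SS Ob"
  shows "\<delta> \<in> Ob \<Longrightarrow> (\<forall>t\<in>{0..1}. \<gamma> t \<in> mo (\<delta> t)) \<Longrightarrow> \<gamma> \<in> Ob"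
  using assms
proof (induction arbitrary: \<gamma> \<delta> rule: generate_topology_on.induct)
  case Empty then show ?case by simp
next
  case (Int a b) then show ?case by blast
next
  case (UN K) then show ?case by blast
next
  case (Basis s)
  then obtain K V where s: "s = {f. f ` K \<subseteq> V}" "compactin unit_interval K" "openin S1_3 V" by blast
  have "K \<subseteq> {0..1}" using compactin_subset_topspace[OF s(2)] by simp
  show ?case unfolding s(1)
  proof (rule CollectI, rule subsetI)
    fix y assume "y \<in> \<gamma> ` K"
    then obtain t where t: "t \<in> K" "y = \<gamma> t" by blast
    have "\<delta> t \<in> V" using Basis(2) s(1) t(1) by blast
    moreover have "\<gamma> t \<in> mo (\<delta> t)" using Basis(3) t(1) \<open>K \<subseteq> {0..1}\<close> by blast
    ultimately show "y \<in> V" using s(3) t(2) unfolding openin_S13 by blast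
  qed
qed

lemma UNIV_SS: "\<Union>SS = UNIV"
proof -
  have "UNIV \<in> SS"
    by (rule CollectI, rule exI[of _ "{}"], rule exI[of _ "{}"]) auto
  then show ?thesis by blast
qed

lemma topspace_path: "topspace (path_space S1_3) = {f. continuous_map unit_interval S1_3 f \<and> f \<in> extensional {0..1}}"
  unfolding path_space_def compact_open_def by (simp add: UNIV_SS)

lemma openin_path_down:
  assumes "openin (path_space S1_3) Ob" "\<delta> \<in> Ob" "\<gamma> \<in> topspace (path_space S1_3)"
    "\<forall>t\<in>{0..1}. \<gamma> t \<in> mo (\<delta> t)"
  shows "\<gamma> \<in> Ob"
proof -
  obtain Ob' where Ob': "openin (topology_generated_by SS) Ob'"
     "Ob = Ob' \<inter> {f. continuous_map unit_interval S1_3 f \<and> f \<in> extensional (topspace unit_interval)}"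
    using assms(1) unfolding path_space_def compact_open_def openin_subtopology by blast
  have "\<gamma> \<in> Ob'" using gen_down[OF Ob'(1)[unfolded openin_topology_generated_by_iff]] assms(2,4) Ob'(2) by blast
  then show ?thesis using assms(3) Ob'(2) topspace_path by simp
qed

lemma open_point_path:
  assumes "t \<in> {0..1}"
  shows "openin (path_space S1_3) ({f. f t \<in> mo c} \<inter> topspace (path_space S1_3))"
proof -
  have "{f. f t \<in> mo c} \<in> SS"
    using assms open_mo by (intro CollectI exI[of _ "{t}"] exI[of _ "mo c"]) auto
  then have "openin (topology_generated_by SS) {f. f t \<in> mo c}"
    unfolding openin_topology_generated_by_iff by (rule generate_topology_on.Basis)
  then show ?thesis unfolding path_space_def compact_open_def openin_subtopology
    by (auto simp: UNIV_SS)
qed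

lemma planner_from_paths:
  fixes P :: "S13 \<times> S13 \<Rightarrow> real \<Rightarrow> S13" and V :: "(S13 \<times> S13) set"
  assumes Vdown: "\<forall>q\<in>V. \<forall>p. le2 p q \<longrightarrow> p \<in> V"
    and cont: "\<forall>p\<in>V. \<forall>t\<in>{0..1}. \<exists>e>0. \<forall>u\<in>{0..1}. \<bar>u-t\<bar><e \<longrightarrow> P p u \<in> mo (P p t)"
    and mono: "\<forall>p\<in>V. \<forall>q\<in>V. le2 p q \<longrightarrow> (\<forall>t\<in>{0..1}. P p t \<in> mo (P q t))"
    and ends: "\<forall>p\<in>V. P p 0 = fst p \<and> P p 1 = snd p"
  shows "has_motion_planner S1_3 V"
proof -
  define s where "s p = restrict (P p) {0..1}" for p
  have ts: "s p \<in> topspace (path_space S1_3)" if "p \<in> V" for p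
  proof -
    have "continuous_map unit_interval S1_3 (P p)" using cont that cont_local by blast
    then have "continuous_map unit_interval S1_3 (s p)"
      unfolding s_def by (rule continuous_map_eq) auto
    then show ?thesis unfolding topspace_path s_def by simp
  qed
  have cm: "continuous_map (subtopology (prod_topology S1_3 S1_3) V) (path_space S1_3) s"
    unfolding continuous_map_def
  proof (intro conjI allI impI)
    show "s \<in> topspace (subtopology (prod_topology S1_3 S1_3) V) \<rightarrow> topspace (path_space S1_3)"
      using ts by auto
    fix Ob assume Ob: "openin (path_space S1_3) Ob"
    let ?P = "{x \<in> topspace (subtopology (prod_topology S1_3 S1_3) V). s x \<in> Ob}"
    have "?P = {x\<in>V. s x \<in> Ob}" by simp
    moreover have "openin (prod_topology S1_3 S1_3) {x\<in>V. s x \<in> Ob}"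
    proof (rule down_open_prod, intro ballI allI impI)
      fix q p assume q: "q \<in> {x\<in>V. s x \<in> Ob}" and pq: "le2 p q"
      have pV: "p \<in> V" using Vdown q pq by blast
      have "\<forall>t\<in>{0..1}. s p t \<in> mo (s q t)" using mono pV q pq unfolding s_def by auto
      then have "s p \<in> Ob" using openin_path_down[OF Ob _ ts[OF pV]] q by blast
      then show "p \<in> {x\<in>V. s x \<in> Ob}" using pV by simp
    qed
    ultimately show "openin (subtopology (prod_topology S1_3 S1_3) V) ?P"
      unfolding openin_subtopology by auto
  qed
  show ?thesis unfolding has_motion_planner_def
    using cm ends by (intro exI[of _ s]) (auto simp: s_def)
qed

lemma planner_pointwise:
  fixes s :: "S13 \<times> S13 \<Rightarrow> real \<Rightarrow> S13" and V :: "(S13 \<times> S13) set"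
  assumes cm: "continuous_map (subtopology (prod_topology S1_3 S1_3) V) (path_space S1_3) s"
    and pV: "p \<in> V" and qV: "q \<in> V" and pq: "le2 p q" and t: "t \<in> {0..1}"
  shows "s p t \<in> mo (s q t)"
proof -
  define Ob where "Ob = {f. f t \<in> mo (s q t)} \<inter> topspace (path_space S1_3)"
  have tsq: "s x \<in> topspace (path_space S1_3)" if "x \<in> V" for x
    using cm that unfolding continuous_map_def by auto
  have oO: "openin (path_space S1_3) Ob" unfolding Ob_def by (rule open_point_path[OF t])
  have "openin (subtopology (prod_topology S1_3 S1_3) V)
      {x \<in> topspace (subtopology (prod_topology S1_3 S1_3) V). s x \<in> Ob}"
    using cm oO unfolding continuous_map_def by blast
  then obtain P' where P': "openin (prod_topology S1_3 S1_3) P'"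
    "{x \<in> topspace (subtopology (prod_topology S1_3 S1_3) V). s x \<in> Ob} = P' \<inter> V"
    unfolding openin_subtopology by blast
  have qO: "s q \<in> Ob" unfolding Ob_def using tsq[OF qV] by simp
  have "q \<in> {x \<in> topspace (subtopology (prod_topology S1_3 S1_3) V). s x \<in> Ob}"
    using qV qO by simp
  then have "q \<in> P'" using P'(2) by blast
  then have "p \<in> P'" using open_prod_down[OF P'(1)] pq by blast
  then have "p \<in> {x \<in> topspace (subtopology (prod_topology S1_3 S1_3) V). s x \<in> Ob}"
    using P'(2) pV by blast
  then show ?thesis unfolding Ob_def by simp
qed

lemma planner_path_cont:
  assumes cm: "continuous_map (subtopology (prod_topology S1_3 S1_3) V) (path_space S1_3) s"
    and pV: "p \<in> V"
  shows "continuous_map unit_interval S1_3 (s p)"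
  using cm pV unfolding continuous_map_def topspace_path by auto



definition leL :: "int \<Rightarrow> int \<Rightarrow> bool" where
  "leL n m \<longleftrightarrow> n = m \<or> (odd m \<and> \<bar>n - m\<bar> = 1)"

definition piL :: "int \<Rightarrow> S13" where
  "piL n = (let r = n mod 6 in if r = 0 then x0 else if r = 1 then y1 else if r = 2 then x1
            else if r = 3 then y2 else if r = 4 then x2 else y0)"

lemma leL_pi:
  assumes "leL n m" shows "piL n \<in> mo (piL m)"
proof (cases "n = m")
  case False
  then have m: "odd m" "n = m + 1 \<or> n = m - 1" using assms unfolding leL_def by auto
  have r: "m mod 6 = 1 \<or> m mod 6 = 3 \<or> m mod 6 = 5" using m(1) by presburger
  from m(2) show ?thesis
  proof
    assume "n = m + 1"
    then have "n mod 6 = (m mod 6 + 1) mod 6" by (simp add: mod_add_left_eq)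
    then show ?thesis using r unfolding piL_def by auto
  next
    assume "n = m - 1"
    then have "n mod 6 = (m mod 6 - 1) mod 6" by (simp add: mod_diff_left_eq)
    then show ?thesis using r unfolding piL_def by auto
  qed
qed simp

definition clampL :: "int \<Rightarrow> int \<Rightarrow> int \<Rightarrow> int" where
  "clampL F G n = max F (min n G)"

lemma clamp_mono_n: "leL n m \<Longrightarrow> leL (clampL F G n) (clampL F G m)"
  unfolding leL_def clampL_def by (auto simp: max_def min_def)

lemma clamp_mono_FG: "leL F F' \<Longrightarrow> leL G G' \<Longrightarrow> leL (clampL F G n) (clampL F' G' n)"
  unfolding leL_def clampL_def by (auto simp: max_def min_def; presburger)



definition kap :: "real \<Rightarrow> int" where
  "kap t = (if t < 1/4 then -2 else if t = 1/4 then -1 else if t < 1/2 then 0 else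
            if t = 1/2 then 1 else if t < 3/4 then 2 else if t = 3/4 then 3 else 4)"

lemma kap_local: "\<exists>e>0. \<forall>u. \<bar>u-t\<bar><e \<longrightarrow> leL (kap u) (kap t)"
proof -
  consider "t < 1/4" | "t = 1/4" | "1/4 < t \<and> t < 1/2" | "t = 1/2" | "1/2 < t \<and> t < 3/4"
    | "t = 3/4" | "3/4 < t" by linarith
  then show ?thesis
  proof cases
    case 1 then show ?thesis by (intro exI[of _ "1/4 - t"]) (auto simp: kap_def leL_def)
  next
    case 2 then show ?thesis by (intro exI[of _ "1/4"]) (auto simp: kap_def leL_def)
  next
    case 3 then show ?thesis by (intro exI[of _ "min (t - 1/4) (1/2 - t)"]) (auto simp: kap_def leL_def)
  next
    case 4 then show ?thesis by (intro exI[of _ "1/4"]) (auto simp: kap_def leL_def)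
  next
    case 5 then show ?thesis by (intro exI[of _ "min (t - 1/2) (3/4 - t)"]) (auto simp: kap_def leL_def)
  next
    case 6 then show ?thesis by (intro exI[of _ "1/4"]) (auto simp: kap_def leL_def)
  next
    case 7 then show ?thesis by (intro exI[of _ "t - 3/4"]) (auto simp: kap_def leL_def)
  qed
qed

lemma kap_rev_local: "\<exists>e>0. \<forall>u. \<bar>u-t\<bar><e \<longrightarrow> leL (kap (1 - u)) (kap (1 - t))"
proof -
  obtain e where "e>0" "\<forall>u. \<bar>u-(1-t)\<bar><e \<longrightarrow> leL (kap u) (kap (1-t))" using kap_local by blast
  then show ?thesis by (intro exI[of _ e]) auto
qed

lemma clamp_planner:
  fixes lo hi :: "S13 \<times> S13 \<Rightarrow> int" and \<sigma> :: "real \<Rightarrow> int" and V :: "(S13 \<times> S13) set"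
  assumes Vdown: "\<forall>q\<in>V. \<forall>p. le2 p q \<longrightarrow> p \<in> V"
    and sig: "\<And>t. \<exists>e>0. \<forall>u. \<bar>u-t\<bar><e \<longrightarrow> leL (\<sigma> u) (\<sigma> t)"
    and mono: "\<forall>p\<in>V. \<forall>q\<in>V. le2 p q \<longrightarrow> leL (lo p) (lo q) \<and> leL (hi p) (hi q)"
    and ends: "\<forall>p\<in>V. piL (clampL (lo p) (hi p) (\<sigma> 0)) = fst p \<and> piL (clampL (lo p) (hi p) (\<sigma> 1)) = snd p"
  shows "has_motion_planner S1_3 V"
proof (rule planner_from_paths[where P = "\<lambda>p t. piL (clampL (lo p) (hi p) (\<sigma> t))"])
  show "\<forall>q\<in>V. \<forall>p. le2 p q \<longrightarrow> p \<in> V" by (rule Vdown)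
  show "\<forall>p\<in>V. \<forall>t\<in>{0..1}. \<exists>e>0. \<forall>u\<in>{0..1}. \<bar>u - t\<bar> < e \<longrightarrow>
      piL (clampL (lo p) (hi p) (\<sigma> u)) \<in> mo (piL (clampL (lo p) (hi p) (\<sigma> t)))"
  proof (intro ballI)
    fix p t
    obtain e where "e>0" "\<forall>u. \<bar>u-t\<bar><e \<longrightarrow> leL (\<sigma> u) (\<sigma> t)" using sig by blast
    then show "\<exists>e>0. \<forall>u\<in>{0..1}. \<bar>u - t\<bar> < e \<longrightarrow>
      piL (clampL (lo p) (hi p) (\<sigma> u)) \<in> mo (piL (clampL (lo p) (hi p) (\<sigma> t)))"
      by (intro exI[of _ e]) (auto intro!: leL_pi clamp_mono_n)
  qed
  show "\<forall>p\<in>V. \<forall>q\<in>V. le2 p q \<longrightarrow> (\<forall>t\<in>{0..1}.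
      piL (clampL (lo p) (hi p) (\<sigma> t)) \<in> mo (piL (clampL (lo q) (hi q) (\<sigma> t))))"
    using mono by (auto intro!: leL_pi clamp_mono_FG)
  show "\<forall>p\<in>V. piL (clampL (lo p) (hi p) (\<sigma> 0)) = fst p \<and> piL (clampL (lo p) (hi p) (\<sigma> 1)) = snd p"
    by (rule ends)
qed

definition posF :: "S13 \<Rightarrow> int" where
  "posF a = (case a of x2 \<Rightarrow> -2 | y0 \<Rightarrow> -1 | x0 \<Rightarrow> 0 | y1 \<Rightarrow> 1 | x1 \<Rightarrow> 2 | y2 \<Rightarrow> 3)"
definition posG :: "S13 \<Rightarrow> int" where
  "posG a = (case a of x0 \<Rightarrow> 0 | y1 \<Rightarrow> 1 | x1 \<Rightarrow> 2 | y2 \<Rightarrow> 3 | x2 \<Rightarrow> 4 | y0 \<Rightarrow> 5)"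

lemma posF_mono: "a \<in> mo b \<Longrightarrow> b \<in> mo y0 \<union> mo y1 \<Longrightarrow> leL (posF a) (posF b)"
  by (cases a; cases b) (auto simp: posF_def leL_def)
lemma posG_mono: "a \<in> mo b \<Longrightarrow> b \<in> mo y1 \<union> mo y2 \<Longrightarrow> leL (posG a) (posG b)"
  by (cases a; cases b) (auto simp: posG_def leL_def)

definition VA :: "(S13 \<times> S13) set" where "VA = mo y0 \<times> mo y1 \<union> mo y0 \<times> mo y2 \<union> mo y1 \<times> mo y2"
definition VB :: "(S13 \<times> S13) set" where "VB = mo y1 \<times> mo y0 \<union> mo y2 \<times> mo y0 \<union> mo y2 \<times> mo y1"
definition VD :: "(S13 \<times> S13) set" where "VD = mo y0 \<times> mo y0 \<union> mo y1 \<times> mo y1 \<union> mo y2 \<times> mo y2"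

lemma down_times: "q \<in> mo a \<times> mo b \<Longrightarrow> le2 p q \<Longrightarrow> p \<in> mo a \<times> mo b"
  unfolding le2_def by (cases p; cases q) (auto intro: mo_trans)

lemma VA_down: "\<forall>q\<in>VA. \<forall>p. le2 p q \<longrightarrow> p \<in> VA"
  unfolding VA_def using down_times by blast
lemma VB_down: "\<forall>q\<in>VB. \<forall>p. le2 p q \<longrightarrow> p \<in> VB"
  unfolding VB_def using down_times by blast
lemma VD_down: "\<forall>q\<in>VD. \<forall>p. le2 p q \<longrightarrow> p \<in> VD"
  unfolding VD_def using down_times by blast

lemma kap0: "kap 0 = -2" and kap1: "kap 1 = 4" by (auto simp: kap_def)

lemma VA_planner: "has_motion_planner S1_3 VA"
proof (rule clamp_planner[where lo = "\<lambda>p. posF (fst p)" and hi = "\<lambda>p. posG (snd p)" and \<sigma> = kap])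
  show "\<forall>q\<in>VA. \<forall>p. le2 p q \<longrightarrow> p \<in> VA" by (rule VA_down)
  show "\<And>t. \<exists>e>0. \<forall>u. \<bar>u - t\<bar> < e \<longrightarrow> leL (kap u) (kap t)" by (rule kap_local)
  show "\<forall>p\<in>VA. \<forall>q\<in>VA. le2 p q \<longrightarrow> leL (posF (fst p)) (posF (fst q)) \<and> leL (posG (snd p)) (posG (snd q))"
    unfolding VA_def le2_def by (auto intro!: posF_mono posG_mono)
  show "\<forall>p\<in>VA. piL (clampL (posF (fst p)) (posG (snd p)) (kap 0)) = fst p \<and>
      piL (clampL (posF (fst p)) (posG (snd p)) (kap 1)) = snd p"
    unfolding VA_def kap0 kap1 by (auto simp: piL_def clampL_def posF_def posG_def)
qed

lemma VB_planner: "has_motion_planner S1_3 VB"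
proof (rule clamp_planner[where lo = "\<lambda>p. posF (snd p)" and hi = "\<lambda>p. posG (fst p)" and \<sigma> = "\<lambda>t. kap (1 - t)"])
  show "\<forall>q\<in>VB. \<forall>p. le2 p q \<longrightarrow> p \<in> VB" by (rule VB_down)
  show "\<And>t. \<exists>e>0. \<forall>u. \<bar>u - t\<bar> < e \<longrightarrow> leL (kap (1 - u)) (kap (1 - t))" by (rule kap_rev_local)
  show "\<forall>p\<in>VB. \<forall>q\<in>VB. le2 p q \<longrightarrow> leL (posF (snd p)) (posF (snd q)) \<and> leL (posG (fst p)) (posG (fst q))"
    unfolding VB_def le2_def by (auto intro!: posF_mono posG_mono)
  show "\<forall>p\<in>VB. piL (clampL (posF (snd p)) (posG (fst p)) (kap (1 - 0))) = fst p \<and>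
      piL (clampL (posF (snd p)) (posG (fst p)) (kap (1 - 1))) = snd p"
    unfolding VB_def using kap0 kap1 by (auto simp: piL_def clampL_def posF_def posG_def)
qed



definition jn :: "S13 \<Rightarrow> S13 \<Rightarrow> S13" where
  "jn a b = (if a \<in> mo b then b else if b \<in> mo a then a else
     if a \<in> mo y0 \<and> b \<in> mo y0 then y0 else if a \<in> mo y1 \<and> b \<in> mo y1 then y1 else y2)"

lemma jn_lub: "a \<in> mo c \<Longrightarrow> b \<in> mo c \<Longrightarrow> jn a b \<in> mo c"
  by (cases a; cases b; cases c) (auto simp: jn_def)

lemma jn_ub: "(a, b) \<in> VD \<Longrightarrow> a \<in> mo (jn a b) \<and> b \<in> mo (jn a b)"
  unfolding VD_def by (cases a; cases b) (auto simp: jn_def)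

lemma VD_planner: "has_motion_planner S1_3 VD"
proof (rule planner_from_paths[where P = "\<lambda>p t. if t < 1/2 then fst p else if t = 1/2 then jn (fst p) (snd p) else snd p"])
  show "\<forall>q\<in>VD. \<forall>p. le2 p q \<longrightarrow> p \<in> VD" by (rule VD_down)
  show "\<forall>p\<in>VD. \<forall>t\<in>{0..1::real}. \<exists>e>(0::real). \<forall>u\<in>{0..1}. \<bar>u - t\<bar> < e \<longrightarrow>
     (if u < 1/2 then fst p else if u = 1/2 then jn (fst p) (snd p) else snd p)
     \<in> mo (if t < 1/2 then fst p else if t = 1/2 then jn (fst p) (snd p) else snd p)"
  proof (intro ballI)
    fix p and t :: real assume p: "p \<in> VD"
    obtain a b where ab: "p = (a,b)" by (cases p)
    have ub: "a \<in> mo (jn a b)" "b \<in> mo (jn a b)" using jn_ub p ab by auto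
    consider "t < 1/2" | "t = 1/2" | "t > 1/2" by linarith
    then show "\<exists>e>(0::real). \<forall>u\<in>{0..1}. \<bar>u - t\<bar> < e \<longrightarrow>
     (if u < 1/2 then fst p else if u = 1/2 then jn (fst p) (snd p) else snd p)
     \<in> mo (if t < 1/2 then fst p else if t = 1/2 then jn (fst p) (snd p) else snd p)"
    proof cases
      case 1 then show ?thesis by (intro exI[of _ "1/2 - t"]) auto
    next
      case 2 then show ?thesis using ub ab by (intro exI[of _ 1]) auto
    next
      case 3 then show ?thesis by (intro exI[of _ "t - 1/2"]) auto
    qed
  qed
  show "\<forall>p\<in>VD. \<forall>q\<in>VD. le2 p q \<longrightarrow> (\<forall>t\<in>{0..1::real}.
     (if t < 1/2 then fst p else if t = 1/2 then jn (fst p) (snd p) else snd p)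
     \<in> mo (if t < 1/2 then fst q else if t = 1/2 then jn (fst q) (snd q) else snd q))"
  proof (intro ballI impI)
    fix p q t assume p: "p \<in> VD" and q: "q \<in> VD" and pq: "le2 p q" and t: "t \<in> {0..1::real}"
    obtain a b where ab: "p = (a,b)" by (cases p)
    obtain c d where cd: "q = (c,d)" by (cases q)
    have ub: "c \<in> mo (jn c d)" "d \<in> mo (jn c d)" using jn_ub q cd by auto
    have le: "a \<in> mo c" "b \<in> mo d" using pq ab cd by (auto simp: le2_def)
    have "jn a b \<in> mo (jn c d)" using jn_lub mo_trans le ub by blast
    then show "(if t < 1/2 then fst p else if t = 1/2 then jn (fst p) (snd p) else snd p)
     \<in> mo (if t < 1/2 then fst q else if t = 1/2 then jn (fst q) (snd q) else snd q)"
      using le ab cd by auto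
  qed
qed auto

lemma cover3: "VD \<union> VA \<union> VB = UNIV"
proof -
  have "(a,b) \<in> VD \<union> VA \<union> VB" for a b
    unfolding VD_def VA_def VB_def by (cases a; cases b) auto
  then show ?thesis by auto
qed

lemma TC_witness3: "\<exists>U :: nat \<Rightarrow> (S13 \<times> S13) set.
   (\<forall>i<3. openin (prod_topology S1_3 S1_3) (U i) \<and> has_motion_planner S1_3 (U i)) \<and>
   (\<Union>i<3. U i) = topspace (prod_topology S1_3 S1_3)"
proof -
  define Uf :: "nat \<Rightarrow> (S13 \<times> S13) set" where "Uf i = (if i = 0 then VD else if i = 1 then VA else VB)" for i
  have h1: "\<forall>i<3. openin (prod_topology S1_3 S1_3) (Uf i) \<and> has_motion_planner S1_3 (Uf i)"
  proof (intro allI impI)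
    fix i :: nat assume "i < 3"
    then have "i = 0 \<or> i = 1 \<or> i = 2" by auto
    then show "openin (prod_topology S1_3 S1_3) (Uf i) \<and> has_motion_planner S1_3 (Uf i)"
      unfolding Uf_def
      using down_open_prod VA_down VB_down VD_down VA_planner VB_planner VD_planner by auto
  qed
  have "{..<3::nat} = {0,1,2}" by auto
  then have h2: "(\<Union>i<3. Uf i) = topspace (prod_topology S1_3 S1_3)"
    using cover3 unfolding Uf_def by auto
  show ?thesis using h1 h2 by blast
qed



definition pos :: "S13 \<Rightarrow> int" where
  "pos a = (case a of x0 \<Rightarrow> 0 | y1 \<Rightarrow> 1 | x1 \<Rightarrow> 2 | y2 \<Rightarrow> 3 | x2 \<Rightarrow> 4 | y0 \<Rightarrow> 5)"

definition disp :: "S13 \<Rightarrow> S13 \<Rightarrow> int" where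
  "disp a b = (let r = (pos b - pos a) mod 6 in if r \<le> 2 then r else r - 6)"

lemma disp_add: "a \<in> mo e \<Longrightarrow> b \<in> mo e \<Longrightarrow> c \<in> mo e \<Longrightarrow> disp a b + disp b c = disp a c"
  by (cases e; cases a; cases b; cases c) (auto simp: disp_def pos_def)

lemma disp_chart: "c \<in> mo e \<Longrightarrow> d \<in> mo e \<Longrightarrow> a \<in> mo c \<Longrightarrow> b \<in> mo d \<Longrightarrow>
   disp a b + disp b d = disp a c + disp c d"
proof -
  assume h: "c \<in> mo e" "d \<in> mo e" "a \<in> mo c" "b \<in> mo d"
  have a: "a \<in> mo e" and b: "b \<in> mo e" using h mo_trans by blast+
  have "disp a b + disp b d = disp a d" using disp_add a b h(2) by blast
  moreover have "disp a c + disp c d = disp a d" using disp_add a h(1,2) by blast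
  ultimately show ?thesis by simp
qed

lemma telescope:
  fixes g h :: "nat \<Rightarrow> S13"
  shows "(\<forall>k\<le>N. g k \<in> mo (h k)) \<Longrightarrow> (\<forall>k<N. \<exists>c. h k \<in> mo c \<and> h (Suc k) \<in> mo c) \<Longrightarrow>
    (\<Sum>k<N. disp (g k) (g (Suc k))) + disp (g N) (h N) = disp (g 0) (h 0) + (\<Sum>k<N. disp (h k) (h (Suc k)))"
proof (induction N)
  case 0 then show ?case by simp
next
  case (Suc N)
  have IH: "(\<Sum>k<N. disp (g k) (g (Suc k))) + disp (g N) (h N) = disp (g 0) (h 0) + (\<Sum>k<N. disp (h k) (h (Suc k)))"
    using Suc by auto
  obtain c where c: "h N \<in> mo c" "h (Suc N) \<in> mo c" using Suc.prems(2) by blast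
  have "disp (g N) (g (Suc N)) + disp (g (Suc N)) (h (Suc N)) = disp (g N) (h N) + disp (h N) (h (Suc N))"
    using disp_chart[OF c] Suc.prems(1) by auto
  then show ?case using IH by simp
qed



lemma path_grid:
  assumes cm: "continuous_map unit_interval S1_3 \<gamma>"
  shows "\<exists>d>0. \<forall>N k. 0 < N \<longrightarrow> 1 / real N < d \<longrightarrow> k < N \<longrightarrow>
           (\<exists>c. \<gamma> (real k / real N) \<in> mo c \<and> \<gamma> (real (Suc k) / real N) \<in> mo c)"
proof -
  have "\<forall>c. \<exists>Oo. open Oo \<and> {t \<in> {0..1}. \<gamma> t \<in> mo c} = {0..1} \<inter> Oo"
  proof
    fix c
    have "openin unit_interval {t \<in> topspace unit_interval. \<gamma> t \<in> mo c}"
      using cm open_mo unfolding continuous_map_def by blast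
    then show "\<exists>Oo. open Oo \<and> {t \<in> {0..1}. \<gamma> t \<in> mo c} = {0..1} \<inter> Oo"
      unfolding openin_open by simp
  qed
  then obtain Of where Of: "\<And>c. open (Of c)" "\<And>c. {t \<in> {0..1}. \<gamma> t \<in> mo c} = {0..1} \<inter> Of c"
    by metis
  have cov: "{0..1::real} \<subseteq> \<Union>(range Of)"
  proof
    fix t :: real assume t: "t \<in> {0..1}"
    then have "t \<in> {t \<in> {0..1}. \<gamma> t \<in> mo (\<gamma> t)}" by simp
    then have "t \<in> Of (\<gamma> t)" using Of(2) by blast
    then show "t \<in> \<Union>(range Of)" by blast
  qed
  obtain d where d: "0 < d" "\<And>T. \<lbrakk>T \<subseteq> {0..1}; diameter T < d\<rbrakk> \<Longrightarrow> \<exists>B \<in> range Of. T \<subseteq> B"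
  proof -
    have "\<And>B. B \<in> range Of \<Longrightarrow> open B" using Of(1) by blast
    from Lebesgue_number_lemma[of "{0..1::real}" "range Of", OF compact_Icc _ cov this]
    show ?thesis using that by blast
  qed
  show ?thesis
  proof (intro exI[of _ d] conjI allI impI)
    show "0 < d" by (rule d(1))
    fix N k :: nat assume N: "0 < N" "1 / real N < d" "k < N"
    let ?T = "{real k / real N .. real (Suc k) / real N}"
    have le: "real k / real N \<le> real (Suc k) / real N" using N by (simp add: divide_right_mono)
    have sub: "?T \<subseteq> {0..1}"
    proof -
      have "real (Suc k) / real N \<le> 1" using N by simp
      moreover have "0 \<le> real k / real N" by simp
      ultimately show ?thesis by auto
    qed
    have "real (Suc k) / real N - real k / real N = 1 / real N"
      by (simp add: diff_divide_distrib[symmetric])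
    then have "diameter ?T < d" using le N(2) by simp
    then obtain c where "?T \<subseteq> Of c" using d(2)[OF sub] by blast
    then have "real k / real N \<in> {0..1} \<inter> Of c" "real (Suc k) / real N \<in> {0..1} \<inter> Of c"
      using sub le by auto
    then show "\<exists>c. \<gamma> (real k / real N) \<in> mo c \<and> \<gamma> (real (Suc k) / real N) \<in> mo c"
      using Of(2)[of c] by blast
  qed
qed

lemma finite_S13: "finite (UNIV :: S13 set)"
proof -
  have "UNIV = {x0,x1,x2,y0,y1,y2}" using S13.exhaust by auto
  then show ?thesis by (metis finite.emptyI finite_insert)
qed

lemma finite_S13S13: "finite (A :: (S13 \<times> S13) set)"
  using finite_S13 by (metis finite_Prod_UNIV finite_subset subset_UNIV)

lemma common_delta:
  assumes "finite A" "\<forall>p\<in>A. \<exists>d>0. Q p d" "\<And>p d d'. Q p d \<Longrightarrow> 0 < d' \<Longrightarrow> d' \<le> d \<Longrightarrow> Q p d'"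
  shows "\<exists>d>0. \<forall>p\<in>A. Q p (d::real)"
  using assms(1,2)
proof (induction A rule: finite_induct)
  case empty then show ?case by (intro exI[of _ 1]) auto
next
  case (insert x F)
  obtain d1 where d1: "d1 > 0" "\<forall>p\<in>F. Q p d1" using insert by auto
  obtain d2 where d2: "d2 > 0" "Q x d2" using insert by auto
  show ?case using d1 d2 assms(3)
    by (intro exI[of _ "min d1 d2"]) (auto simp: min_def)
qed

definition Ed :: "S13 \<times> S13 \<Rightarrow> S13 \<times> S13 \<Rightarrow> int" where
  "Ed p q = disp (snd p) (snd q) - disp (fst p) (fst q)"

lemma planner_rel:
  assumes oV: "openin (prod_topology S1_3 S1_3) V" and pl: "has_motion_planner S1_3 V"
  shows "\<exists>W. \<forall>p\<in>V. \<forall>q\<in>V. le2 p q \<longrightarrow> W q - W p = Ed p q"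
proof -
  obtain s where cm: "continuous_map (subtopology (prod_topology S1_3 S1_3) V) (path_space S1_3) s"
    and ends: "\<forall>p\<in>V. s p 0 = fst p \<and> s p 1 = snd p"
    using pl unfolding has_motion_planner_def by blast
  let ?Q = "\<lambda>p d. \<forall>N k. 0 < N \<longrightarrow> 1 / real N < d \<longrightarrow> k < N \<longrightarrow>
           (\<exists>c. s p (real k / real N) \<in> mo c \<and> s p (real (Suc k) / real N) \<in> mo c)"
  have "\<exists>d>0. \<forall>p\<in>V. ?Q p d"
  proof (rule common_delta)
    show "finite V" by (rule finite_S13S13)
    show "\<forall>p\<in>V. \<exists>d>0. ?Q p d" using path_grid planner_path_cont[OF cm] by blast
    show "\<And>p d d'. ?Q p d \<Longrightarrow> 0 < d' \<Longrightarrow> d' \<le> d \<Longrightarrow> ?Q p d'" by force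
  qed
  then obtain d where d: "d > 0" "\<forall>p\<in>V. ?Q p d" by blast
  obtain N :: nat where N: "N > 0" "1 / real N < d"
  proof -
    obtain n :: nat where n: "1 / d < real n" using reals_Archimedean2 by blast
    have "0 < real n" using n d(1) by (smt (verit) divide_pos_pos)
    then have "1 / real n < d" using n d(1) by (simp add: divide_less_eq mult.commute)
    then show ?thesis using that \<open>0 < real n\<close> by simp
  qed
  define W where "W p = (\<Sum>k<N. disp (s p (real k / real N)) (s p (real (Suc k) / real N)))" for p
  show ?thesis
  proof (intro exI[of _ W] ballI impI)
    fix p q assume p: "p \<in> V" and q: "q \<in> V" and pq: "le2 p q"
    define g where "g k = s p (real k / real N)" for k
    define h where "h k = s q (real k / real N)" for k
    have grid: "real k / real N \<in> {0..1}" if "k \<le> N" for k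
      using that N(1) by auto
    have 1: "\<forall>k\<le>N. g k \<in> mo (h k)"
      unfolding g_def h_def using planner_pointwise[OF cm p q pq] grid by blast
    have 2: "\<forall>k<N. \<exists>c. h k \<in> mo c \<and> h (Suc k) \<in> mo c"
      unfolding h_def using d(2) q N by blast
    have tel: "(\<Sum>k<N. disp (g k) (g (Suc k))) + disp (g N) (h N) = disp (g 0) (h 0) + (\<Sum>k<N. disp (h k) (h (Suc k)))"
      by (rule telescope[OF 1 2])
    have e: "g 0 = fst p" "h 0 = fst q" "g N = snd p" "h N = snd q"
      unfolding g_def h_def using ends p q N(1) by auto
    have "W p = (\<Sum>k<N. disp (g k) (g (Suc k)))" "W q = (\<Sum>k<N. disp (h k) (h (Suc k)))"
      unfolding W_def g_def h_def by simp_all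
    then show "W q - W p = Ed p q" using tel e unfolding Ed_def by simp
  qed
qed



definition mt :: "S13 \<Rightarrow> S13 \<Rightarrow> S13" where
  "mt a b = (if a = b then a else if {a,b} = {y0,y1} then x0 else if {a,b} = {y1,y2} then x1 else x2)"

definition mt2 :: "S13 \<times> S13 \<Rightarrow> S13 \<times> S13 \<Rightarrow> S13 \<times> S13" where
  "mt2 p q = (mt (fst p) (fst q), mt (snd p) (snd q))"

lemma tri:
  assumes rel: "\<forall>p\<in>V. \<forall>q\<in>V. le2 p q \<longrightarrow> W q - W p = Ed p q"
    and down: "\<forall>q\<in>V. \<forall>p. le2 p q \<longrightarrow> p \<in> V"
    and m: "m1 \<in> V" "m2 \<in> V" "m3 \<in> V"
    and l: "le2 (mt2 m1 m2) m1" "le2 (mt2 m1 m2) m2" "le2 (mt2 m2 m3) m2" "le2 (mt2 m2 m3) m3"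
           "le2 (mt2 m3 m1) m3" "le2 (mt2 m3 m1) m1"
  shows "(Ed (mt2 m1 m2) m2 - Ed (mt2 m1 m2) m1) + (Ed (mt2 m2 m3) m3 - Ed (mt2 m2 m3) m2)
          + (Ed (mt2 m3 m1) m1 - Ed (mt2 m3 m1) m3) = 0"
proof -
  have lV: "mt2 m1 m2 \<in> V" "mt2 m2 m3 \<in> V" "mt2 m3 m1 \<in> V" using down m l by blast+
  have "W m1 - W (mt2 m1 m2) = Ed (mt2 m1 m2) m1" "W m2 - W (mt2 m1 m2) = Ed (mt2 m1 m2) m2"
       "W m2 - W (mt2 m2 m3) = Ed (mt2 m2 m3) m2" "W m3 - W (mt2 m2 m3) = Ed (mt2 m2 m3) m3"
       "W m3 - W (mt2 m3 m1) = Ed (mt2 m3 m1) m3" "W m1 - W (mt2 m3 m1) = Ed (mt2 m3 m1) m1"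
    using rel lV m l by blast+
  then show ?thesis by linarith
qed

lemma bad:
  assumes rel: "\<forall>p\<in>V. \<forall>q\<in>V. le2 p q \<longrightarrow> W q - W p = Ed p q"
    and down: "\<forall>q\<in>V. \<forall>p. le2 p q \<longrightarrow> p \<in> V"
    and nz: "(Ed (mt2 m1 m2) m2 - Ed (mt2 m1 m2) m1) + (Ed (mt2 m2 m3) m3 - Ed (mt2 m2 m3) m2)
          + (Ed (mt2 m3 m1) m1 - Ed (mt2 m3 m1) m3) \<noteq> 0"
    and l: "le2 (mt2 m1 m2) m1 \<and> le2 (mt2 m1 m2) m2 \<and> le2 (mt2 m2 m3) m2 \<and> le2 (mt2 m2 m3) m3 \<and>
           le2 (mt2 m3 m1) m3 \<and> le2 (mt2 m3 m1) m1"
  shows "\<not> (m1 \<in> V \<and> m2 \<in> V \<and> m3 \<in> V)"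
  using tri[OF rel down] nz l by blast

lemma no_good_loops:
  assumes oV: "openin (prod_topology S1_3 S1_3) V" and pl: "has_motion_planner S1_3 V"
  shows "\<not> ((y0,y0) \<in> V \<and> (y0,y1) \<in> V \<and> (y0,y2) \<in> V)"
    "\<not> ((y0,y0) \<in> V \<and> (y1,y0) \<in> V \<and> (y2,y0) \<in> V)"
    "\<not> ((y0,y1) \<in> V \<and> (y1,y0) \<in> V \<and> (y1,y2) \<in> V)"
    "\<not> ((y0,y0) \<in> V \<and> (y1,y1) \<in> V \<and> (y1,y2) \<in> V)"
    "\<not> ((y0,y1) \<in> V \<and> (y1,y1) \<in> V \<and> (y2,y0) \<in> V)"
    "\<not> ((y0,y2) \<in> V \<and> (y1,y0) \<in> V \<and> (y1,y1) \<in> V)"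
    "\<not> ((y0,y2) \<in> V \<and> (y1,y2) \<in> V \<and> (y2,y0) \<in> V)"
proof -
  obtain W where rel: "\<forall>p\<in>V. \<forall>q\<in>V. le2 p q \<longrightarrow> W q - W p = Ed p q"
    using planner_rel[OF oV pl] by blast
  have down: "\<forall>q\<in>V. \<forall>p. le2 p q \<longrightarrow> p \<in> V" using open_prod_down[OF oV] by blast
  note B = bad[OF rel down]
  show "\<not> ((y0,y0) \<in> V \<and> (y0,y1) \<in> V \<and> (y0,y2) \<in> V)"
    by (rule B) (auto simp: Ed_def disp_def pos_def mt2_def mt_def le2_def)
  show "\<not> ((y0,y0) \<in> V \<and> (y1,y0) \<in> V \<and> (y2,y0) \<in> V)"
    by (rule B) (auto simp: Ed_def disp_def pos_def mt2_def mt_def le2_def)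
  show "\<not> ((y0,y1) \<in> V \<and> (y1,y0) \<in> V \<and> (y1,y2) \<in> V)"
    by (rule B) (auto simp: Ed_def disp_def pos_def mt2_def mt_def le2_def)
  show "\<not> ((y0,y0) \<in> V \<and> (y1,y1) \<in> V \<and> (y1,y2) \<in> V)"
    by (rule B) (auto simp: Ed_def disp_def pos_def mt2_def mt_def le2_def)
  show "\<not> ((y0,y1) \<in> V \<and> (y1,y1) \<in> V \<and> (y2,y0) \<in> V)"
    by (rule B) (auto simp: Ed_def disp_def pos_def mt2_def mt_def le2_def)
  show "\<not> ((y0,y2) \<in> V \<and> (y1,y0) \<in> V \<and> (y1,y1) \<in> V)"
    by (rule B) (auto simp: Ed_def disp_def pos_def mt2_def mt_def le2_def)
  show "\<not> ((y0,y2) \<in> V \<and> (y1,y2) \<in> V \<and> (y2,y0) \<in> V)"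
    by (rule B) (auto simp: Ed_def disp_def pos_def mt2_def mt_def le2_def)
qed

lemma no_two_cover:
  assumes o1: "openin (prod_topology S1_3 S1_3) V1" and p1: "has_motion_planner S1_3 V1"
    and o2: "openin (prod_topology S1_3 S1_3) V2" and p2: "has_motion_planner S1_3 V2"
    and cov: "V1 \<union> V2 = UNIV"
  shows False
proof -
  note A = no_good_loops[OF o1 p1] and B = no_good_loops[OF o2 p2]
  have c: "\<And>p. p \<in> V1 \<or> p \<in> V2" using cov by blast
  show False using A B c[of "(y0,y0)"] c[of "(y0,y1)"] c[of "(y0,y2)"] c[of "(y1,y0)"] c[of "(y1,y1)"]
     c[of "(y1,y2)"] c[of "(y2,y0)"] c[of "(y2,y1)"] c[of "(y2,y2)"] by sat
qed



theorem corollary6: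
  shows "TC S1_3 = 3"
  unfolding TC_def
proof (rule Least_equality)
  show "\<exists>U :: nat \<Rightarrow> (S13 \<times> S13) set.
   (\<forall>i<3. openin (prod_topology S1_3 S1_3) (U i) \<and> has_motion_planner S1_3 (U i)) \<and>
   (\<Union>i<3. U i) = topspace (prod_topology S1_3 S1_3)" by (rule TC_witness3)
next
  fix k assume "\<exists>U :: nat \<Rightarrow> (S13 \<times> S13) set.
   (\<forall>i<k. openin (prod_topology S1_3 S1_3) (U i) \<and> has_motion_planner S1_3 (U i)) \<and>
   (\<Union>i<k. U i) = topspace (prod_topology S1_3 S1_3)"
  then obtain U :: "nat \<Rightarrow> (S13 \<times> S13) set" where
    U: "\<forall>i<k. openin (prod_topology S1_3 S1_3) (U i) \<and> has_motion_planner S1_3 (U i)"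
       "(\<Union>i<k. U i) = UNIV" by auto
  show "3 \<le> k"
  proof (rule ccontr)
    assume "\<not> 3 \<le> k"
    then have "k = 0 \<or> k = 1 \<or> k = 2" by auto
    then show False
    proof (elim disjE)
      assume "k = 0" then show False using U(2) by auto
    next
      assume k: "k = 1"
      have "{..<k} = {0}" using k by auto
      then have "U 0 \<union> U 0 = UNIV" using U(2) by auto
      then show False using no_two_cover U(1) k by auto
    next
      assume k: "k = 2"
      have "{..<k} = {0,1}" using k by auto
      then have "U 0 \<union> U 1 = UNIV" using U(2) by auto
      moreover have "openin (prod_topology S1_3 S1_3) (U 0)" "has_motion_planner S1_3 (U 0)"
        "openin (prod_topology S1_3 S1_3) (U 1)" "has_motion_planner S1_3 (U 1)" using U(1) k by auto
      ultimately show False using no_two_cover by blast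
    qed
  qed
qed


end
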